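(* Let $m,n \in \mathbb{N}$, $S = (s_1,\dots,s_n)^T \in \mathbb{N}^n$ with $s_k \le 2^m$, fix $c \in \mathbb{N}$ and let $N = n^c$. Define $U = (u_1,\dots,u_n)^T$ by $u_k = \left\lfloor N \cdot \frac{s_k}{\|S\|}\right\rfloor$, let $c_a = \frac{\sum_{k=1}^n u_k s_k}{\|U\|\cdot\|S\|}$ (the cosine of the angle between $U$ and $S$) and $d^{\star} = \frac{\sqrt{n}}{2}\sqrt{1-c_a^2}$. Let $Q \in \{0,1\}^n$ satisfy $$U^T\cdot\left(Q - \left(\frac{1}{2}\cdot 1_{n\times 1} + \frac{U}{\|U\|}\cdot d\right)\right) = 0$$ for some $d$ with $-d^{\star} \le d \le d^{\star}$ (equivalently $U^T Q = \frac{U^T 1_{n\times 1}}{2} + d\,\|U\|$). Then $$\left| \frac{S^T \cdot Q}{\frac{S^T \cdot 1_{n\times 1}}{2}} - 1 \right| \le 2\cdot\frac{n}{N}.$$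
   Context: $1_{n\times 1}$ denotes the all-ones vector in $\mathbb{R}^n$ and $\|\cdot\|$ the Euclidean norm. *)

theory Defs
  imports "HOL-Analysis.Analysis"
begin

end

theory Submission
  imports Defs
begin

lemma sumsq_le_sqsum:
  fixes f :: "'a \<Rightarrow> real"
  assumes "finite A" "\<forall>k\<in>A. f k \<ge> 0"
  shows "(\<Sum>k\<in>A. (f k)\<^sup>2) \<le> (\<Sum>k\<in>A. f k)\<^sup>2"
proof -
  have "(\<Sum>k\<in>A. (f k)\<^sup>2) \<le> (\<Sum>k\<in>A. f k * (\<Sum>j\<in>A. f j))"
  proof (rule sum_mono)
    fix k assume k: "k \<in> A"
    have "f k \<le> (\<Sum>j\<in>A. f j)" using member_le_sum[of k A f] assms k by auto
    then show "(f k)\<^sup>2 \<le> f k * (\<Sum>j\<in>A. f j)"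
      using assms k by (simp add: power2_eq_square mult_left_mono)
  qed
  also have "\<dots> = (\<Sum>k\<in>A. f k)\<^sup>2" by (simp add: power2_eq_square sum_distrib_right)
  finally show ?thesis .
qed

theorem theorem2p3:
  fixes m c N :: nat
    and S U Q :: "real ^ 'n"
    and ca dstar d :: real
  assumes S_nat: "\<forall>k. S $ k \<in> \<nat>"
    and S_bound: "\<forall>k. S $ k \<le> 2 ^ m"
    and S_nonzero: "S \<noteq> 0"
    and N_def: "N = CARD('n) ^ c"
    and U_def: "U = (\<chi> k. of_int \<lfloor>real N * (S $ k / norm S)\<rfloor>)"
    and ca_def: "ca = (U \<bullet> S) / (norm U * norm S)"
    and dstar_def: "dstar = sqrt (real CARD('n)) / 2 * sqrt (1 - ca\<^sup>2)"
    and Q_01: "\<forall>k. Q $ k \<in> {0, 1}"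
    and d_range: "- dstar \<le> d" "d \<le> dstar"
    and Q_eq: "U \<bullet> (Q - ((1/2) *\<^sub>R (\<chi> k. 1) + (d / norm U) *\<^sub>R U)) = 0"
  shows "\<bar>(S \<bullet> Q) / ((S \<bullet> (\<chi> k. 1)) / 2) - 1\<bar> \<le> 2 * real CARD('n) / real N"
proof -
  define n where "n = real CARD('n)"
  define nS where "nS = norm S"
  define one :: "real ^ 'n" where "one = (\<chi> k. 1)"
  have npos: "n > 0" unfolding n_def by simp
  have Npos: "real N > 0" unfolding N_def by simp
  have nSpos: "nS > 0" unfolding nS_def using S_nonzero by simp
  have Snn: "\<forall>k. S $ k \<ge> 0" using S_nat by (metis Nats_cases of_nat_0_le_iff)
  define T where "T = S \<bullet> one"
  have T_sum: "T = (\<Sum>k\<in>UNIV. S $ k)" unfolding T_def one_def inner_vec_def by simp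
  have nS2: "nS\<^sup>2 = (\<Sum>k\<in>UNIV. (S $ k)\<^sup>2)"
    unfolding nS_def power2_norm_eq_inner inner_vec_def by (simp add: power2_eq_square)
  have "nS\<^sup>2 \<le> T\<^sup>2" unfolding nS2 T_sum using sumsq_le_sqsum[of UNIV "\<lambda>k. S $ k"] Snn by simp
  moreover have "T \<ge> 0" unfolding T_sum using Snn by (simp add: sum_nonneg)
  ultimately have nST: "nS \<le> T" using nSpos using power2_le_imp_le by blast
  define e :: "real ^ 'n" where "e = (\<chi> k. real N * (S $ k / nS) - U $ k)"
  have e01: "\<forall>k. 0 \<le> e $ k \<and> e $ k < 1"
    unfolding e_def U_def nS_def by (simp add: floor_le_iff) linarith
  have Ue: "U + e = (real N / nS) *\<^sub>R S"
    unfolding e_def by (simp add: vec_eq_iff)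
  have S_Ue: "S = (nS / real N) *\<^sub>R (U + e)"
    using Ue nSpos Npos by simp
  have UQ: "U \<bullet> Q = U \<bullet> one / 2 + d * norm U"
  proof (cases "U = 0")
    case True then show ?thesis by simp
  next
    case False
    then have "norm U \<noteq> 0" by simp
    have "U \<bullet> U = (norm U)\<^sup>2" by (simp add: power2_norm_eq_inner)
    with Q_eq \<open>norm U \<noteq> 0\<close> show ?thesis unfolding one_def
      by (simp add: inner_diff_right inner_add_right power2_eq_square)
  qed
  have SQ: "S \<bullet> Q = (nS / real N) * (U \<bullet> Q + e \<bullet> Q)"
    by (subst S_Ue) (simp add: inner_add_left)
  have S1: "T = (nS / real N) * (U \<bullet> one + e \<bullet> one)"
    unfolding T_def by (subst S_Ue) (simp add: inner_add_left)
  have Tpos: "T > 0" using nST nSpos by linarith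
  define E where "E = e \<bullet> Q - e \<bullet> one / 2"
  have key: "(S \<bullet> Q) / (T / 2) - 1 = (nS / real N) * (2 * d * norm U + 2 * E) / T"
  proof -
    have "(S \<bullet> Q) / (T / 2) - 1 = (2 * (S \<bullet> Q) - T) / T" using Tpos by (simp add: field_simps)
    also have "2 * (S \<bullet> Q) - T = (nS / real N) * (2 * d * norm U + 2 * E)"
      unfolding SQ S1 UQ E_def by (simp add: algebra_simps)
    finally show ?thesis .
  qed
  have Ebound: "\<bar>2 * E\<bar> \<le> n"
  proof -
    have "2 * E = (\<Sum>k\<in>UNIV. e $ k * (2 * Q $ k - 1))"
      unfolding E_def one_def inner_vec_def by (simp add: sum_subtractf sum_distrib_left algebra_simps sum_divide_distrib)
    also have "\<bar>\<dots>\<bar> \<le> (\<Sum>k\<in>UNIV. \<bar>e $ k * (2 * Q $ k - 1)\<bar>)" by (rule sum_abs)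
    also have "\<dots> \<le> (\<Sum>k\<in>(UNIV::'n set). 1)"
    proof (rule sum_mono)
      fix k :: 'n
      have "Q $ k = 0 \<or> Q $ k = 1" using Q_01 by auto
      then show "\<bar>e $ k * (2 * Q $ k - 1)\<bar> \<le> 1" using e01[rule_format, of k] by auto
    qed
    also have "\<dots> = n" unfolding n_def by simp
    finally show ?thesis .
  qed
  have perp: "(norm U)\<^sup>2 * (1 - ca\<^sup>2) \<le> n"
  proof (cases "U = 0")
    case True then show ?thesis using npos by simp
  next
    case False
    then have nU: "norm U > 0" by simp
    have "(norm U)\<^sup>2 * (1 - ca\<^sup>2) = (norm U)\<^sup>2 - (U \<bullet> S)\<^sup>2 / nS\<^sup>2"
      unfolding ca_def nS_def using nU nSpos by (simp add: field_simps power2_eq_square nS_def)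
    also have "\<dots> = (norm ((real N / nS) *\<^sub>R S - e))\<^sup>2 - (((real N / nS) *\<^sub>R S - e) \<bullet> S)\<^sup>2 / nS\<^sup>2"
    proof -
      have "U = (real N / nS) *\<^sub>R S - e" using Ue by (simp add: algebra_simps)
      then show ?thesis by simp
    qed
    also have "(norm ((real N / nS) *\<^sub>R S - e))\<^sup>2 - (((real N / nS) *\<^sub>R S - e) \<bullet> S)\<^sup>2 / nS\<^sup>2
       = (norm e)\<^sup>2 - (e \<bullet> S)\<^sup>2 / nS\<^sup>2"
    proof -
      define a where "a = real N / nS"
      have SS: "S \<bullet> S = nS\<^sup>2" unfolding nS_def by (simp add: power2_norm_eq_inner)
      have ee: "e \<bullet> e = (norm e)\<^sup>2" by (simp add: power2_norm_eq_inner)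
      have nd: "(norm (a *\<^sub>R S - e))\<^sup>2 = a\<^sup>2 * nS\<^sup>2 - 2 * a * (e \<bullet> S) + (norm e)\<^sup>2"
        unfolding power2_norm_eq_inner[of "a *\<^sub>R S - e"]
        by (simp add: inner_diff_left inner_diff_right inner_commute SS ee power2_eq_square algebra_simps)
      have ip: "(a *\<^sub>R S - e) \<bullet> S = a * nS\<^sup>2 - e \<bullet> S"
        by (simp add: inner_diff_left SS)
      show ?thesis unfolding a_def[symmetric] nd ip using nSpos
        by (simp add: field_simps power2_eq_square)
    qed
    also have "\<dots> \<le> (norm e)\<^sup>2" by simp
    also have "(norm e)\<^sup>2 = (\<Sum>k\<in>UNIV. (e $ k)\<^sup>2)"
      unfolding power2_norm_eq_inner inner_vec_def by (simp add: power2_eq_square)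
    also have "\<dots> \<le> (\<Sum>k\<in>(UNIV::'n set). 1)"
    proof (rule sum_mono)
      fix k :: 'n
      show "(e $ k)\<^sup>2 \<le> 1" using e01[rule_format, of k]
        by (simp add: abs_le_square_iff power2_eq_square mult_le_one)
    qed
    also have "\<dots> = n" unfolding n_def by simp
    finally show ?thesis .
  qed
  have dU: "\<bar>2 * d * norm U\<bar> \<le> n"
  proof -
    have "\<bar>d\<bar> \<le> dstar" using d_range by linarith
    then have "\<bar>d\<bar> * norm U \<le> dstar * norm U" by (simp add: mult_right_mono)
    also have "\<dots> = sqrt n / 2 * sqrt ((norm U)\<^sup>2 * (1 - ca\<^sup>2))"
      unfolding dstar_def n_def by (simp add: real_sqrt_mult)
    also have "\<dots> \<le> sqrt n / 2 * sqrt n"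
      using perp npos by (intro mult_left_mono real_sqrt_le_mono) auto
    also have "\<dots> = n / 2" using npos by simp
    finally show ?thesis by (simp add: abs_mult)
  qed
  have "\<bar>(S \<bullet> Q) / (T / 2) - 1\<bar> = (nS / real N) * \<bar>2 * d * norm U + 2 * E\<bar> / T"
    unfolding key using nSpos Npos Tpos by (simp add: abs_mult abs_divide)
  also have "\<dots> \<le> (nS / real N) * (2 * n) / T"
  proof -
    have "\<bar>2 * d * norm U + 2 * E\<bar> \<le> 2 * n" using dU Ebound by linarith
    then show ?thesis using nSpos Npos Tpos
      by (intro divide_right_mono mult_left_mono) auto
  qed
  also have "\<dots> \<le> 2 * n / real N"
    using nST nSpos Npos Tpos npos by (simp add: field_simps mult_right_mono)
  finally show ?thesis unfolding T_def one_def n_def .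
qed

end
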